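(* Let $\Sigma\subseteq\mathbb{C}$ be a finite set, let $b_m\in\Sigma^{\mathbb{Z}}$ for all $m\in\mathbb{N}$, and let $b_m\to b$ pointwise (so $b\in\Sigma^{\mathbb{Z}}$). Assume moreover that for every $N\in\mathbb{N}$, $g(N):=\sup_{m\in\mathbb{N}}\operatorname{gap}(N,b_m)<\infty$. Then for every $N\in\mathbb{N}$ there is $m_0$ such that $\mathcal{W}_N(b_m)\subseteq\mathcal{W}_N(b)$ for all $m\ge m_0$.
   Context: For $u\in\Sigma^{\mathbb{Z}}$ and $N\in\mathbb{N}$, $\mathcal{W}_N(u)$ is the set of words $(u(k),\dots,u(k+N-1))\in\Sigma^N$, $k\in\mathbb{Z}$. For $w\in\mathcal{W}_N(u)$: $\operatorname{pos}(w,u):=\{k\in\mathbb{Z}:(u(k),\dots,u(k+N-1))=w\}$, $\operatorname{gap}(w,u):=\min\{r\in\mathbb{N}:\operatorname{pos}(w,u)+\{-r,\dots,r\}=\mathbb{Z}\}$ (with $\min\emptyset=\infty$), and $\operatorname{gap}(N,u):=\max\{\operatorname{gap}(w,u):w\in\mathcal{W}_N(u)\}$. *)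

theory Defs
  imports Complex_Main "HOL-Library.Extended_Nat"
begin

definition word_at :: "(int \<Rightarrow> 'a) \<Rightarrow> nat \<Rightarrow> int \<Rightarrow> 'a list" where
  "word_at u N k = map (\<lambda>i. u (k + int i)) [0..<N]"

definition words :: "nat \<Rightarrow> (int \<Rightarrow> 'a) \<Rightarrow> 'a list set" where
  "words N u = {word_at u N k | k. True}"

definition pos :: "'a list \<Rightarrow> (int \<Rightarrow> 'a) \<Rightarrow> int set" where
  "pos w u = {k. word_at u (length w) k = w}"

text \<open>gap(w,u) = min { r in N : pos(w,u) + {-r..r} = Z }, with min of empty set = infinity.\<close>
definition gap_word :: "'a list \<Rightarrow> (int \<Rightarrow> 'a) \<Rightarrow> enat" where
  "gap_word w u = (INF r \<in> {r::nat. {k + j | k j. k \<in> pos w u \<and> j \<in> {- int r .. int r}} = UNIV}. enat r)"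

definition gap :: "nat \<Rightarrow> (int \<Rightarrow> 'a) \<Rightarrow> enat" where
  "gap N u = (SUP w \<in> words N u. gap_word w u)"

end

theory Submission
  imports Defs
begin

lemma ev_eq:
  fixes b :: "nat \<Rightarrow> int \<Rightarrow> complex"
  assumes "finite \<Sigma>" "\<And>m k. b m k \<in> \<Sigma>" "(\<lambda>m. b m k) \<longlonglongrightarrow> L"
  shows "eventually (\<lambda>m. b m k = L) sequentially"
proof -
  have "closed (\<Sigma> - {L})" using assms(1) by (simp add: finite_imp_closed)
  then have "open (- (\<Sigma> - {L}))" by (rule open_Compl)
  moreover have "L \<in> - (\<Sigma> - {L})" by simp
  ultimately have "eventually (\<lambda>m. b m k \<in> - (\<Sigma> - {L})) sequentially"
    using assms(3) topological_tendstoD by blast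
  then show ?thesis by eventually_elim (use assms(2) in auto)
qed

theorem proposition4p13:
  fixes \<Sigma> :: "complex set" and b :: "nat \<Rightarrow> int \<Rightarrow> complex" and b_lim :: "int \<Rightarrow> complex"
  assumes "finite \<Sigma>"
    and "\<And>m k. b m k \<in> \<Sigma>"
    and "\<And>k. (\<lambda>m. b m k) \<longlonglongrightarrow> b_lim k"
    and "\<And>N. (SUP m. gap N (b m)) < \<infinity>"
  shows "\<forall>N. \<exists>m0. \<forall>m\<ge>m0. words N (b m) \<subseteq> words N b_lim"
proof
  fix N
  obtain g where g: "(SUP m. gap N (b m)) = enat g"
    using assms(4)[of N] by (cases "(SUP m. gap N (b m))") auto
  define R where "R = int g + int N"
  have "eventually (\<lambda>m. \<forall>k\<in>{-R..R}. b m k = b_lim k) sequentially"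
    by (rule eventually_ball_finite) (auto intro: ev_eq[OF assms(1) assms(2) assms(3)])
  then obtain m0 where m0: "\<And>m k. m \<ge> m0 \<Longrightarrow> k \<in> {-R..R} \<Longrightarrow> b m k = b_lim k"
    unfolding eventually_sequentially by blast
  show "\<exists>m0. \<forall>m\<ge>m0. words N (b m) \<subseteq> words N b_lim"
  proof (intro exI allI impI subsetI)
    fix m w assume mm: "m \<ge> m0" and w: "w \<in> words N (b m)"
    have "gap_word w (b m) \<le> gap N (b m)" unfolding gap_def using w by (rule SUP_upper)
    also have "\<dots> \<le> (SUP m. gap N (b m))" by (rule SUP_upper) simp
    finally have "gap_word w (b m) \<le> enat g" using g by simp
    also have "enat g < enat (Suc g)" by simp
    finally have "gap_word w (b m) < enat (Suc g)" .
    then obtain r where r: "{k + j | k j. k \<in> pos w (b m) \<and> j \<in> {- int r .. int r}} = UNIV"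
      and rg: "enat r < enat (Suc g)"
      unfolding gap_word_def by (auto simp: INF_less_iff)
    have "(0::int) \<in> {k + j | k j. k \<in> pos w (b m) \<and> j \<in> {- int r .. int r}}" using r by simp
    then obtain k j where kj: "0 = k + j" "k \<in> pos w (b m)" "j \<in> {- int r .. int r}" by blast
    have rg': "r \<le> g" using rg by simp
    have lw: "length w = N" using w unfolding words_def word_at_def by auto
    have wk: "word_at (b m) N k = w" using kj(2) lw unfolding pos_def by simp
    have "word_at (b m) N k = word_at b_lim N k"
      unfolding word_at_def
    proof (rule map_cong[OF refl])
      fix i assume "i \<in> set [0..<N]"
      then have "i < N" by simp
      then show "b m (k + int i) = b_lim (k + int i)"
        using kj(1,3) rg' by (intro m0[OF mm]) (auto simp: R_def)
    qed
    then show "w \<in> words N b_lim" using wk unfolding words_def by auto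
  qed
qed

end
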